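(* Let $m<M$ be real numbers and let $X$ be a random variable taking values in $[m,M]$, either discrete (taking finitely many values $x_1,\dots,x_n\in[m,M]$ with probabilities $p_1,\dots,p_n$) or continuous (with probability density $f$ on $[m,M]$). Let $\mu_1'$ be its mean and $\mu_2,\mu_3,\mu_4$ its second, third and fourth central moments, and assume $\mu_2\neq(\mu_1'-m)(M-\mu_1')$. Then $$\mu_2\mu_4-\mu_2^3-\mu_3^2\le \frac{\big((\mu_1'-m)(M-\mu_1')(M-m)\big)^2}{27}\le\frac{(M-m)^6}{432}.$$
   Context: The mean is $\mu_1'=\sum_{i=1}^n p_i x_i$ (discrete case) or $\mu_1'=\int_m^M x f(x)\,dx$ (continuous case), where $\sum p_i=1$, resp. $\int_m^M f(x)\,dx=1$. The $r$-th central moment is $\mu_r=\sum_{i=1}^n p_i (x_i-\mu_1')^r$, resp. $\mu_r=\int_m^M (x-\mu_1')^r f(x)\,dx$. *)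

theory Defs
  imports "HOL-Analysis.Analysis"
begin

definition disc_mean :: "nat \<Rightarrow> (nat \<Rightarrow> real) \<Rightarrow> (nat \<Rightarrow> real) \<Rightarrow> real" where
  "disc_mean n p x = (\<Sum>i<n. p i * x i)"

definition disc_cmoment :: "nat \<Rightarrow> (nat \<Rightarrow> real) \<Rightarrow> (nat \<Rightarrow> real) \<Rightarrow> nat \<Rightarrow> real" where
  "disc_cmoment n p x r = (\<Sum>i<n. p i * (x i - disc_mean n p x) ^ r)"

definition cont_mean :: "real \<Rightarrow> real \<Rightarrow> (real \<Rightarrow> real) \<Rightarrow> real" where
  "cont_mean m M f = integral {m..M} (\<lambda>t. t * f t)"

definition cont_cmoment :: "real \<Rightarrow> real \<Rightarrow> (real \<Rightarrow> real) \<Rightarrow> nat \<Rightarrow> real" where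
  "cont_cmoment m M f r = integral {m..M} (\<lambda>t. (t - cont_mean m M f) ^ r * f t)"

end

theory Submission
  imports Defs
begin

lemma cont_prod_int:
  fixes f g :: "real \<Rightarrow> real"
  assumes f: "f integrable_on {m..M}" and fp: "\<forall>t\<in>{m..M}. f t \<ge> 0"
    and g: "continuous_on UNIV g"
  shows "(\<lambda>t. g t * f t) integrable_on {m..M}"
proof -
  have fa: "f absolutely_integrable_on {m..M}"
    using nonnegative_absolutely_integrable_1[OF f] fp by auto
  have gm: "g \<in> borel_measurable (lebesgue_on {m..M})"
    by (rule continuous_imp_measurable_on_sets_lebesgue[OF continuous_on_subset[OF g]]) auto
  have gb: "bounded (g ` {m..M})"
    using compact_continuous_image[OF continuous_on_subset[OF g] compact_Icc] compact_imp_bounded by blast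
  show ?thesis
    using absolutely_integrable_bounded_measurable_product_real[OF gm _ gb fa]
    by (simp add: absolutely_integrable_on_def)
qed

lemma cont_pos:
  fixes f :: "real \<Rightarrow> real"
  assumes f: "f integrable_on {m..M}" and fp: "\<forall>t\<in>{m..M}. f t \<ge> 0"
    and f1: "integral {m..M} f = 1"
    and q: "\<forall>t\<in>{m..M}. 0 \<le> a0 + a1*(t - cont_mean m M f) + a2*(t - cont_mean m M f)^2
          + a3*(t - cont_mean m M f)^3 + a4*(t - cont_mean m M f)^4"
  shows "0 \<le> a0 + a2 * cont_cmoment m M f 2 + a3 * cont_cmoment m M f 3 + a4 * cont_cmoment m M f 4"
proof -
  define u where "u = cont_mean m M f"
  have I: "\<And>g. continuous_on UNIV g \<Longrightarrow> (\<lambda>t. g t * f t) integrable_on {m..M}"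
    using cont_prod_int[OF f fp] by blast
  have i1: "(\<lambda>t. t * f t) integrable_on {m..M}" by (rule I) (intro continuous_intros)
  have ik: "\<And>k::nat. (\<lambda>t. (t - u)^k * f t) integrable_on {m..M}" by (rule I) (intro continuous_intros)
  have c1: "integral {m..M} (\<lambda>t. (t - u) * f t) = 0"
  proof -
    have "integral {m..M} (\<lambda>t. (t - u) * f t) = integral {m..M} (\<lambda>t. t * f t - u * f t)"
      by (simp add: algebra_simps)
    also have "\<dots> = integral {m..M} (\<lambda>t. t * f t) - u * integral {m..M} f"
    proof -
      have cu: "(\<lambda>t. u * f t) integrable_on {m..M}" using integrable_cmul[OF f, of u] by simp
      show ?thesis by (simp add: integral_diff[OF i1 cu])
    qed
    finally show ?thesis using f1 by (simp add: u_def cont_mean_def)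
  qed
  have "0 \<le> integral {m..M} (\<lambda>t. (a0 + a1*(t - u) + a2*(t - u)^2 + a3*(t - u)^3 + a4*(t - u)^4) * f t)"
    by (rule integral_nonneg) (auto intro!: I continuous_intros simp: q[unfolded u_def[symmetric]] fp)
  also have "\<dots> = integral {m..M} (\<lambda>t. a0 * f t + a1 * ((t - u)^1 * f t) + a2 * ((t - u)^2 * f t)
       + a3 * ((t - u)^3 * f t) + a4 * ((t - u)^4 * f t))"
    by (simp add: algebra_simps)
  also have "\<dots> = a0 * integral {m..M} f + a1 * integral {m..M} (\<lambda>t. (t - u)^1 * f t)
      + a2 * integral {m..M} (\<lambda>t. (t - u)^2 * f t) + a3 * integral {m..M} (\<lambda>t. (t - u)^3 * f t)
      + a4 * integral {m..M} (\<lambda>t. (t - u)^4 * f t)"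
  proof -
    have j: "\<And>k c. (\<lambda>t. c * ((t-u)^k * f t)) integrable_on {m..M}" using integrable_cmul[OF ik] by simp
    have j0: "(\<lambda>t. a0 * f t) integrable_on {m..M}" using integrable_cmul[OF f] by simp
    have j1: "(\<lambda>t. a1 * ((t-u) * f t)) integrable_on {m..M}" using j[where k=1 and c=a1] by simp
    note j2 = j[where k=2 and c=a2] and j3 = j[where k=3 and c=a3] and j4 = j[where k=4 and c=a4]
    show ?thesis
      by (simp add: integral_add integrable_add j0 j1 j2 j3 j4)
  qed
  finally show ?thesis using c1 f1 by (simp add: cont_cmoment_def u_def)
qed

lemma disc_pos:
  assumes h: "\<forall>i<n. x i \<in> {m..M} \<and> p i \<ge> 0" and p1: "(\<Sum>i<n. p i) = 1"
    and q: "\<forall>t\<in>{m..M}. 0 \<le> a0 + a1*(t - disc_mean n p x) + a2*(t - disc_mean n p x)^2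
          + a3*(t - disc_mean n p x)^3 + a4*(t - disc_mean n p x)^4"
  shows "0 \<le> a0 + a2 * disc_cmoment n p x 2 + a3 * disc_cmoment n p x 3 + a4 * disc_cmoment n p x 4"
proof -
  define u where "u = disc_mean n p x"
  have c1: "(\<Sum>i<n. p i * (x i - u)) = 0"
  proof -
    have "(\<Sum>i<n. p i * (x i - u)) = (\<Sum>i<n. p i * x i) - u * (\<Sum>i<n. p i)"
      by (simp add: algebra_simps sum_subtractf sum_distrib_left)
    then show ?thesis using p1 by (simp add: u_def disc_mean_def)
  qed
  have "0 \<le> (\<Sum>i<n. p i * (a0 + a1*(x i - u) + a2*(x i - u)^2 + a3*(x i - u)^3 + a4*(x i - u)^4))"
    using h q[unfolded u_def[symmetric]] by (intro sum_nonneg mult_nonneg_nonneg) auto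
  also have "\<dots> = (\<Sum>i<n. a0 * p i + a1 * (p i * (x i - u)) + a2 * (p i * (x i - u)^2)
       + a3 * (p i * (x i - u)^3) + a4 * (p i * (x i - u)^4))"
    by (simp add: algebra_simps)
  also have "\<dots> = a0 * (\<Sum>i<n. p i) + a1 * (\<Sum>i<n. p i * (x i - u)) + a2 * (\<Sum>i<n. p i * (x i - u)^2)
       + a3 * (\<Sum>i<n. p i * (x i - u)^3) + a4 * (\<Sum>i<n. p i * (x i - u)^4)"
    by (simp add: sum.distrib sum_distrib_left)
  finally show ?thesis using c1 p1 by (simp add: disc_cmoment_def u_def)
qed


lemma core:
  fixes m M u u2 u3 u4 :: real
  assumes mM: "m < M"
    and pos: "\<forall>a0 a1 a2 a3 a4. (\<forall>t\<in>{m..M}. 0 \<le> a0 + a1*(t-u) + a2*(t-u)^2 + a3*(t-u)^3 + a4*(t-u)^4)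
         \<longrightarrow> 0 \<le> a0 + a2*u2 + a3*u3 + a4*u4"
    and ne: "u2 \<noteq> (u - m) * (M - u)"
  shows "u2*u4 - u2^3 - u3^2 \<le> ((u - m) * (M - u) * (M - m))^2 / 27 \<and>
         ((u - m) * (M - u) * (M - m))^2 / 27 \<le> (M - m)^6 / 432"
proof -
  define a where "a = u - m"
  define b where "b = M - u"
  define P where "P = a*b"
  define c where "c = b - a"
  define s where "s = P - u2"
  define k where "k = c*u2 - u3"
  have Mm: "M - m = a + b" by (simp add: a_def b_def)
  have a0: "0 \<le> a"
    using pos[rule_format, of "u - m" 1 0 0 0] by (auto simp: a_def)
  have b0: "0 \<le> b"
    using pos[rule_format, of "M - u" "-1" 0 0 0] by (auto simp: b_def)
  have u20: "0 \<le> u2"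
    using pos[rule_format, of 0 0 1 0 0] by auto
  have w: "\<And>t. t \<in> {m..M} \<Longrightarrow> 0 \<le> (t - u + a) * (b - (t - u))"
    by (auto simp: a_def b_def)
  have s0: "0 \<le> s"
  proof -
    have "0 \<le> P + (-1)*u2 + 0*u3 + 0*u4"
    proof (rule pos[rule_format, of P c "-1" 0 0])
      fix t :: real assume t: "t \<in> {m..M}"
      have "P + c*(t-u) + (-1)*(t-u)^2 + 0*(t-u)^3 + 0*(t-u)^4 = (t - u + a) * (b - (t - u))"
        by (simp add: P_def c_def algebra_simps power2_eq_square)
      then show "0 \<le> P + c*(t-u) + (-1)*(t-u)^2 + 0*(t-u)^3 + 0*(t-u)^4" using w[OF t] by simp
    qed
    then show ?thesis by (simp add: s_def)
  qed
  have sp: "0 < s" using s0 ne by (auto simp: s_def P_def a_def b_def)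
  have Pp: "0 < P" using sp u20 by (simp add: s_def)
  have H: "0 \<le> P*k^2 + (P* s^2 - 2* s*k*c - k^2)*u2 + (c* s^2 + 2* s*k)*u3 + (- (s^2))*u4"
  proof -
    have "0 \<le> P*k^2 + (P* s^2 - 2* s*k*c - k^2)*u2 + (c* s^2 + 2* s*k)*u3 + (- (s^2))*u4"
    proof (rule pos[rule_format, of "P*k^2" "c*k^2 - 2* s*k*P" "P* s^2 - 2* s*k*c - k^2" "c* s^2 + 2* s*k" "- (s^2)"])
      fix t :: real assume t: "t \<in> {m..M}"
      have "P*k^2 + (c*k^2 - 2* s*k*P)*(t-u) + (P* s^2 - 2* s*k*c - k^2)*(t-u)^2 + (c* s^2 + 2* s*k)*(t-u)^3 + (- (s^2))*(t-u)^4
            = ((t - u + a) * (b - (t - u))) * (s*(t-u) - k)^2"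
        by (simp add: P_def c_def algebra_simps power2_eq_square power3_eq_cube power4_eq_xxxx)
      then show "0 \<le> P*k^2 + (c*k^2 - 2* s*k*P)*(t-u) + (P* s^2 - 2* s*k*c - k^2)*(t-u)^2 + (c* s^2 + 2* s*k)*(t-u)^3 + (- (s^2))*(t-u)^4"
        using w[OF t] by simp
    qed
    then show ?thesis by simp
  qed
  define r where "r = P*u2 + c*u3 - u4"
  have Hr: "P*k^2 + (P* s^2 - 2* s*k*c - k^2)*u2 + (c* s^2 + 2* s*k)*u3 + (- (s^2))*u4 = s*(s*r - k^2)"
    by (simp add: r_def k_def s_def algebra_simps power2_eq_square)
  have sr: "k^2 \<le> s*r"
    using H Hr sp by (metis diff_ge_0_iff_ge zero_le_mult_iff not_less)
  have su4: "s*u4 \<le> s*(P*u2 + c*u3) - k^2"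
    using sr by (simp add: r_def algebra_simps)
  define D where "D = u2*u4 - u2^3 - u3^2"
  define R where "R = u2*(s*(P*u2 + c*u3) - k^2) - s*u2^3 - s*u3^2"
  have sD: "s*D \<le> R"
  proof -
    have "u2*(s*u4) \<le> u2*(s*(P*u2 + c*u3) - k^2)" using su4 u20 by (rule mult_left_mono)
    then show ?thesis by (simp add: D_def R_def algebra_simps)
  qed
  have idR: "4*P*R = u2^2* s^2*(4*P + c^2) - (2*P*u3 - c*u2*(s+2*u2))^2"
    by (simp add: R_def k_def s_def algebra_simps power2_eq_square power3_eq_cube)
  have "4*P*(s*D) \<le> 4*P*R" using sD Pp by simp
  also have "\<dots> \<le> u2^2* s^2*(a+b)^2"
  proof -
    have e: "4*P + c^2 = (a+b)^2" by (simp add: P_def c_def power2_eq_square algebra_simps)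
    have "0 \<le> (2*P*u3 - c*u2*(s+2*u2))^2" by simp
    then show ?thesis using idR unfolding e[symmetric] by linarith
  qed
  finally have "s*(4*P*D) \<le> s*(u2^2* s*(a+b)^2)" by (simp add: algebra_simps power2_eq_square)
  hence d1: "4*P*D \<le> u2^2* s*(a+b)^2" using sp by simp
  have cub: "27*(u2^2* s) \<le> 4*P^3"
  proof -
    have "4*P^3 - 27*(u2^2* s) = (3*u2 - 2*P)^2*(3*u2 + P)"
      by (simp add: s_def algebra_simps power2_eq_square power3_eq_cube)
    also have "\<dots> \<ge> 0" using u20 Pp by simp
    finally show ?thesis by simp
  qed
  have "27*(4*P*D) \<le> 27*(u2^2* s*(a+b)^2)" using d1 by (rule mult_left_mono) simp
  also have "\<dots> = (27*(u2^2* s))*(a+b)^2" by (simp add: mult_ac)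
  also have "\<dots> \<le> (4*P^3)*(a+b)^2" using cub by (rule mult_right_mono) simp
  finally have f1: "27*(4*P*D) \<le> (4*P^3)*(a+b)^2" .
  have eq1: "27*(4*P*D) = (4*P)*(27*D)" by simp
  have eq2: "(4*P^3)*(a+b)^2 = (4*P)*(P^2*(a+b)^2)" by (simp add: power3_eq_cube power2_eq_square mult_ac)
  have "(4*P)*(27*D) \<le> (4*P)*(P^2*(a+b)^2)" using f1 unfolding eq1 eq2 .
  hence D27: "27*D \<le> P^2*(a+b)^2" using Pp mult_le_cancel_left_pos[of "4*P" "27*D" "P^2*(a+b)^2"] by simp
  have sq: "((u - m) * (M - u) * (M - m))^2 = (P*(a+b))^2"
    by (simp add: Mm P_def a_def[symmetric] b_def[symmetric])
  have first: "D \<le> ((u - m) * (M - u) * (M - m))^2 / 27"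
  proof -
    have "27*D \<le> (P*(a+b))^2" using D27 by (simp only: power_mult_distrib)
    hence "27*D/27 \<le> (P*(a+b))^2/27" by (rule divide_right_mono) simp
    thus ?thesis unfolding sq by simp
  qed
  have "16*(P*(a+b))^2 \<le> (a+b)^6"
  proof -
    have e: "(a+b)^2 - 4*P = (a-b)^2" by (simp add: P_def power2_eq_square algebra_simps)
    have "0 \<le> (a-b)^2" by simp
    hence "4*P \<le> (a+b)^2" using e by linarith
    hence "(4*P)^2 * ((a+b)^2) \<le> ((a+b)^2)^2 * (a+b)^2"
      using Pp by (intro mult_right_mono power_mono) auto
    moreover have "16*(P*(a+b))^2 = (4*P)^2 * ((a+b)^2)" by (simp add: power_mult_distrib)
    moreover have "(a+b)^6 = ((a+b)^2)^2 * (a+b)^2" unfolding power_mult[symmetric] power_add[symmetric] by simp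
    ultimately show ?thesis by (simp only:)
  qed
  hence "16*(P*(a+b))^2/432 \<le> (a+b)^6/432" by (rule divide_right_mono) simp
  hence second: "((u - m) * (M - u) * (M - m))^2 / 27 \<le> (M - m)^6 / 432"
    unfolding sq unfolding Mm by simp
  show ?thesis using first second unfolding D_def by (intro conjI)
qed


theorem corollary2p3:
  fixes m M :: real
  assumes "m < M"
  shows
   "(\<forall>(n::nat) (p::nat \<Rightarrow> real) (x::nat \<Rightarrow> real).
       (\<forall>i<n. x i \<in> {m..M} \<and> p i \<ge> 0) \<and> (\<Sum>i<n. p i) = 1 \<and>
       disc_cmoment n p x 2 \<noteq> (disc_mean n p x - m) * (M - disc_mean n p x) \<longrightarrow>
       disc_cmoment n p x 2 * disc_cmoment n p x 4 - disc_cmoment n p x 2 ^ 3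
         - disc_cmoment n p x 3 ^ 2
         \<le> ((disc_mean n p x - m) * (M - disc_mean n p x) * (M - m)) ^ 2 / 27 \<and>
       ((disc_mean n p x - m) * (M - disc_mean n p x) * (M - m)) ^ 2 / 27
         \<le> (M - m) ^ 6 / 432)
  \<and>
   (\<forall>f::real \<Rightarrow> real.
       f integrable_on {m..M} \<and> (\<forall>t\<in>{m..M}. f t \<ge> 0) \<and> integral {m..M} f = 1 \<and>
       cont_cmoment m M f 2 \<noteq> (cont_mean m M f - m) * (M - cont_mean m M f) \<longrightarrow>
       cont_cmoment m M f 2 * cont_cmoment m M f 4 - cont_cmoment m M f 2 ^ 3
         - cont_cmoment m M f 3 ^ 2
         \<le> ((cont_mean m M f - m) * (M - cont_mean m M f) * (M - m)) ^ 2 / 27 \<and>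
       ((cont_mean m M f - m) * (M - cont_mean m M f) * (M - m)) ^ 2 / 27
         \<le> (M - m) ^ 6 / 432)"
proof (intro conjI allI impI)
  fix n and p x :: "nat \<Rightarrow> real"
  assume h: "(\<forall>i<n. x i \<in> {m..M} \<and> p i \<ge> 0) \<and> (\<Sum>i<n. p i) = 1 \<and>
       disc_cmoment n p x 2 \<noteq> (disc_mean n p x - m) * (M - disc_mean n p x)"
  have pos: "\<forall>a0 a1 a2 a3 a4. (\<forall>t\<in>{m..M}. 0 \<le> a0 + a1*(t - disc_mean n p x) + a2*(t - disc_mean n p x)^2
          + a3*(t - disc_mean n p x)^3 + a4*(t - disc_mean n p x)^4) \<longrightarrow>
     0 \<le> a0 + a2 * disc_cmoment n p x 2 + a3 * disc_cmoment n p x 3 + a4 * disc_cmoment n p x 4"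
    using disc_pos[of n x m M p] h by blast
  note c = core[OF assms pos]
  show "disc_cmoment n p x 2 * disc_cmoment n p x 4 - disc_cmoment n p x 2 ^ 3
         - disc_cmoment n p x 3 ^ 2
         \<le> ((disc_mean n p x - m) * (M - disc_mean n p x) * (M - m)) ^ 2 / 27"
    using c h by blast
  show "((disc_mean n p x - m) * (M - disc_mean n p x) * (M - m)) ^ 2 / 27
         \<le> (M - m) ^ 6 / 432"
    using c h by blast
next
  fix f :: "real \<Rightarrow> real"
  assume h: "f integrable_on {m..M} \<and> (\<forall>t\<in>{m..M}. f t \<ge> 0) \<and> integral {m..M} f = 1 \<and>
       cont_cmoment m M f 2 \<noteq> (cont_mean m M f - m) * (M - cont_mean m M f)"
  have pos: "\<forall>a0 a1 a2 a3 a4. (\<forall>t\<in>{m..M}. 0 \<le> a0 + a1*(t - cont_mean m M f) + a2*(t - cont_mean m M f)^2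
          + a3*(t - cont_mean m M f)^3 + a4*(t - cont_mean m M f)^4) \<longrightarrow>
     0 \<le> a0 + a2 * cont_cmoment m M f 2 + a3 * cont_cmoment m M f 3 + a4 * cont_cmoment m M f 4"
    using cont_pos[of f m M] h by blast
  note c = core[OF assms pos]
  show "cont_cmoment m M f 2 * cont_cmoment m M f 4 - cont_cmoment m M f 2 ^ 3
         - cont_cmoment m M f 3 ^ 2
         \<le> ((cont_mean m M f - m) * (M - cont_mean m M f) * (M - m)) ^ 2 / 27"
    using c h by blast
  show "((cont_mean m M f - m) * (M - cont_mean m M f) * (M - m)) ^ 2 / 27
         \<le> (M - m) ^ 6 / 432"
    using c h by blast
qed

end
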